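(* Let $\mathbf{J}=(J_{ij})\in\mathbb{R}^{n\times n}$ be a real symmetric matrix with zero diagonal, let $\alpha>0$, and let $\beta$ satisfy $$\beta\ \ge\ \|\mathbf{J}+\alpha\mathbf{I}\|_\infty=\max_{1\le i\le n}\Big(\alpha+\sum_{j\ne i}|J_{ij}|\Big).$$ Let $\boldsymbol{x}^{(0)}\in\mathbb{R}^n$ be arbitrary and define $\boldsymbol{x}^{(k+1)}=\mathcal{T}(\boldsymbol{x}^{(k)})$ for $k\ge0$, where $\mathcal{T}(\boldsymbol{x})=\varphi(\beta^{-1}(\mathbf{J}+\alpha\mathbf{I})\boldsymbol{x})$ and $\varphi(z_1,\dots,z_n)=(\sqrt[3]{z_1},\dots,\sqrt[3]{z_n})$ (real cube roots). Then the sequence $\{\boldsymbol{x}^{(k)}\}$ is bounded. *)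

theory Defs
  imports "HOL-Analysis.Analysis"
begin

text \<open>Componentwise real cube root (Isabelle's root 3 is the odd, sign-preserving real cube root).\<close>
definition cbrt_vec :: "real ^ 'n \<Rightarrow> real ^ 'n" where
  "cbrt_vec z = (\<chi> i. root 3 (z $ i))"

definition T_map :: "real ^ 'n ^ 'n \<Rightarrow> real \<Rightarrow> real \<Rightarrow> real ^ 'n \<Rightarrow> real ^ 'n" where
  "T_map J \<alpha> \<beta> x = cbrt_vec ((inverse \<beta>) *\<^sub>R ((J + \<alpha> *\<^sub>R mat 1) *v x))"

end

theory Submission
  imports Defs
begin

lemma root3_le_self: assumes "(1::real) \<le> M" shows "root 3 M \<le> M"
proof -
  have r1: "1 \<le> root 3 M" using assms by simp
  have "root 3 M ^ 3 = M" using assms by simp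
  moreover have "root 3 M \<le> root 3 M ^ 3"
  proof -
    have "root 3 M * 1 \<le> root 3 M * (root 3 M * root 3 M)"
      using r1 by (intro mult_left_mono) (auto intro: order_trans[OF _ mult_mono[of 1 _ 1]])
    thus ?thesis by (simp add: power3_eq_cube)
  qed
  ultimately show ?thesis by simp
qed

lemma step:
  fixes J :: "real ^ 'n ^ 'n" and x :: "real ^ 'n"
  assumes diag: "\<forall>i. J $ i $ i = 0" and a: "\<alpha> > 0"
    and b: "\<forall>i. \<alpha> + (\<Sum>j\<in>UNIV - {i}. \<bar>J $ i $ j\<bar>) \<le> \<beta>"
    and M: "1 \<le> M" and xb: "\<forall>i. \<bar>x $ i\<bar> \<le> M"
  shows "\<bar>T_map J \<alpha> \<beta> x $ i\<bar> \<le> M"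
proof -
  have bpos: "\<beta> > 0"
  proof -
    have "0 \<le> (\<Sum>j\<in>UNIV - {i}. \<bar>J $ i $ j\<bar>)" by (simp add: sum_nonneg)
    thus ?thesis using spec[OF b, of i] a by linarith
  qed
  have e: "((J + \<alpha> *\<^sub>R mat 1) *v x) $ i = \<alpha> * x $ i + (\<Sum>j\<in>UNIV - {i}. J $ i $ j * x $ j)"
  proof -
    have "((J + \<alpha> *\<^sub>R mat 1) *v x) $ i = (\<Sum>j\<in>UNIV. (J $ i $ j + (if i = j then \<alpha> else 0)) * x $ j)"
      by (simp add: matrix_vector_mult_def mat_def if_distrib cong: if_cong)
    also have "\<dots> = (\<Sum>j\<in>UNIV. J $ i $ j * x $ j) + (\<Sum>j\<in>UNIV. (if i = j then \<alpha> else 0) * x $ j)"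
      by (simp add: distrib_right sum.distrib)
    also have "(\<Sum>j\<in>UNIV. (if i = j then \<alpha> else 0) * x $ j) = \<alpha> * x $ i"
      by (subst if_distrib[where f="\<lambda>c. c * _"]) (simp only: mult_zero_left sum.delta sum.delta' finite UNIV_I if_True)
    also have "(\<Sum>j\<in>UNIV. J $ i $ j * x $ j) = J $ i $ i * x $ i + (\<Sum>j\<in>UNIV - {i}. J $ i $ j * x $ j)"
      by (simp add: sum.remove)
    finally show ?thesis using diag by simp
  qed
  have "\<bar>((J + \<alpha> *\<^sub>R mat 1) *v x) $ i\<bar> \<le> \<alpha> * M + (\<Sum>j\<in>UNIV - {i}. \<bar>J $ i $ j\<bar> * M)"
  proof -
    have "\<bar>\<alpha> * x $ i\<bar> \<le> \<alpha> * M" using a xb by (simp add: abs_mult)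
    moreover have "\<bar>\<Sum>j\<in>UNIV - {i}. J $ i $ j * x $ j\<bar> \<le> (\<Sum>j\<in>UNIV - {i}. \<bar>J $ i $ j\<bar> * M)"
      by (rule order_trans[OF sum_abs]) (auto intro!: sum_mono simp: abs_mult xb mult_left_mono)
    ultimately show ?thesis unfolding e by linarith
  qed
  also have "\<dots> = (\<alpha> + (\<Sum>j\<in>UNIV - {i}. \<bar>J $ i $ j\<bar>)) * M"
    by (simp add: sum_distrib_right distrib_right)
  also have "\<dots> \<le> \<beta> * M" using b M by (intro mult_right_mono) auto
  finally have z: "\<bar>inverse \<beta> * ((J + \<alpha> *\<^sub>R mat 1) *v x) $ i\<bar> \<le> M"
    using bpos by (simp add: abs_mult field_simps)
  have "\<bar>T_map J \<alpha> \<beta> x $ i\<bar> = root 3 \<bar>inverse \<beta> * ((J + \<alpha> *\<^sub>R mat 1) *v x) $ i\<bar>"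
    by (simp add: T_map_def cbrt_vec_def real_root_abs)
  also have "\<dots> \<le> root 3 M" using z by simp
  also have "\<dots> \<le> M" using M by (rule root3_le_self)
  finally show ?thesis .
qed

theorem propositionS10:
  fixes J :: "real ^ 'n ^ 'n" and \<alpha> \<beta> :: real and x0 :: "real ^ 'n"
  assumes "transpose J = J"
    and "\<forall>i. J $ i $ i = 0"
    and "\<alpha> > 0"
    and "\<forall>i. \<alpha> + (\<Sum>j\<in>UNIV - {i}. \<bar>J $ i $ j\<bar>) \<le> \<beta>"
  shows "bounded (range (\<lambda>k. (T_map J \<alpha> \<beta> ^^ k) x0))"
proof -
  define M where "M = 1 + (\<Sum>i\<in>UNIV. \<bar>x0 $ i\<bar>)"
  have M1: "1 \<le> M" unfolding M_def by (simp add: sum_nonneg)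
  have x0b: "\<bar>x0 $ i\<bar> \<le> M" for i
  proof -
    have "\<bar>x0 $ i\<bar> \<le> (\<Sum>i\<in>UNIV. \<bar>x0 $ i\<bar>)"
      by (rule member_le_sum) auto
    thus ?thesis unfolding M_def by simp
  qed
  have inv: "\<forall>i. \<bar>(T_map J \<alpha> \<beta> ^^ k) x0 $ i\<bar> \<le> M" for k
  proof (induction k)
    case 0 then show ?case using x0b by simp
  next
    case (Suc k) then show ?case
      using step[OF assms(2) assms(3) assms(4) M1] by simp
  qed
  have "norm ((T_map J \<alpha> \<beta> ^^ k) x0) \<le> CARD('n) * M" for k
  proof -
    have "norm ((T_map J \<alpha> \<beta> ^^ k) x0) \<le> (\<Sum>i\<in>UNIV. \<bar>(T_map J \<alpha> \<beta> ^^ k) x0 $ i\<bar>)"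
      by (rule norm_le_l1_cart)
    also have "\<dots> \<le> (\<Sum>i\<in>(UNIV::'n set). M)" using inv by (intro sum_mono) auto
    finally show ?thesis by simp
  qed
  thus ?thesis unfolding bounded_iff by blast
qed

end
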